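(* Let $X_1,X_2$ be connected graphs, each with at least two vertices, $X=X_1\square X_2$, and let $F_{-2}$ be the orthogonal projection onto the $(-2)$-eigenspace of the adjacency matrix of $\mathcal L(X)$. Let $\varepsilon_1\neq\varepsilon_2$ be edges of $X$. Then $F_{-2}\mathbf h_{\varepsilon_1}=\pm F_{-2}\mathbf h_{\varepsilon_2}$ (for some sign) if and only if, up to interchanging the roles of $X_1$ and $X_2$ and of $\varepsilon_1,\varepsilon_2$, one of the following holds: (i) $X_2=K_2$ with $V(X_2)=\{1,2\}$, and there is an edge $\{a,b\}$ of $X_1$ with $-2\notin\Lambda_{\mathbf f_{ab}}$ such that $\varepsilon_1$ joins $(a,1)$ and $(b,1)$ and $\varepsilon_2$ joins $(a,2)$ and $(b,2)$; (ii) there are a pendant vertex $a$ of $X_1$ with its edge $\{a,b\}\in E(X_1)$ and a pendant vertex $\alpha$ of $X_2$ with its edge $\{\alpha,\beta\}\in E(X_2)$, with $-2\notin\Lambda_{\mathbf f_{ab}}$ and $-2\notin\Lambda_{\mathbf f_{\alpha\beta}}$, such that $\varepsilon_1$ joins $(a,\alpha)$ and $(a,\beta)$ and $\varepsilon_2$ joins $(a,\alpha)$ and $(b,\alpha)$. Moreover, in case (i) $F_{-2}\mathbf h_{\varepsilon_1}=F_{-2}\mathbf h_{\varepsilon_2}\ne\mathbf 0$, and in case (ii) $F_{-2}\mathbf h_{\varepsilon_1}=-F_{-2}\mathbf h_{\varepsilon_2}\neq\mathbf 0$.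
   Context: $X_1\square X_2$ is the Cartesian product: vertex set $V(X_1)\times V(X_2)$, with $(x,y)\sim(x',y')$ iff ($x=x'$ and $y\sim y'$) or ($y=y'$ and $x\sim x'$). The line graph $\mathcal L(Y)$ has vertex set $E(Y)$, edges adjacent iff they share an endpoint. For an edge $\varepsilon$ of $X$, $\mathbf h_\varepsilon$ is the standard basis vector of the corresponding vertex of $\mathcal L(X)$. For $\{a,b\}\in E(X_j)$, $\mathbf f_{ab}$ is the vertex state of $\mathcal L(X_j)$ and $\Lambda_{\mathbf f_{ab}}$ its eigenvalue support with respect to the adjacency matrix of $\mathcal L(X_j)$ (set of eigenvalues $\theta$ whose spectral projection does not annihilate $\mathbf f_{ab}$). A pendant vertex is a vertex of degree one. *)

theory Defs
  imports Complex_Main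
begin

definition is_graph :: "'a set \<Rightarrow> 'a set set \<Rightarrow> bool" where
  "is_graph V E \<longleftrightarrow> finite V \<and> (\<forall>e\<in>E. \<exists>x y. x \<in> V \<and> y \<in> V \<and> x \<noteq> y \<and> e = {x, y})"

definition adj :: "'a set set \<Rightarrow> 'a \<Rightarrow> 'a \<Rightarrow> bool" where
  "adj E x y \<longleftrightarrow> {x, y} \<in> E"

definition connected_graph :: "'a set \<Rightarrow> 'a set set \<Rightarrow> bool" where
  "connected_graph V E \<longleftrightarrow> is_graph V E \<and> V \<noteq> {} \<and> (\<forall>x\<in>V. \<forall>y\<in>V. (adj E)\<^sup>*\<^sup>* x y)"

definition degree :: "'a set set \<Rightarrow> 'a \<Rightarrow> nat" where
  "degree E x = card {y. {x, y} \<in> E}"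

definition pendant :: "'a set \<Rightarrow> 'a set set \<Rightarrow> 'a \<Rightarrow> bool" where
  "pendant V E x \<longleftrightarrow> x \<in> V \<and> degree E x = 1"

definition cart_E :: "'a set \<Rightarrow> 'a set set \<Rightarrow> 'b set \<Rightarrow> 'b set set \<Rightarrow> ('a \<times> 'b) set set" where
  "cart_E V1 E1 V2 E2 =
     {{(x, y), (x, y')} | x y y'. x \<in> V1 \<and> {y, y'} \<in> E2} \<union>
     {{(x, y), (x', y)} | x x' y. y \<in> V2 \<and> {x, x'} \<in> E1}"

definition line_adj :: "'a set set \<Rightarrow> 'a set \<Rightarrow> 'a set \<Rightarrow> real" where
  "line_adj E e e' = (if e \<in> E \<and> e' \<in> E \<and> e \<noteq> e' \<and> e \<inter> e' \<noteq> {} then 1 else 0)"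

(* Real vectors indexed by a finite set S: functions vanishing outside S *)
definition vec_on :: "'i set \<Rightarrow> ('i \<Rightarrow> real) \<Rightarrow> bool" where
  "vec_on S v \<longleftrightarrow> (\<forall>x. x \<notin> S \<longrightarrow> v x = 0)"

definition inner_on :: "'i set \<Rightarrow> ('i \<Rightarrow> real) \<Rightarrow> ('i \<Rightarrow> real) \<Rightarrow> real" where
  "inner_on S u v = (\<Sum>x\<in>S. u x * v x)"

definition mat_vec :: "'i set \<Rightarrow> ('i \<Rightarrow> 'i \<Rightarrow> real) \<Rightarrow> ('i \<Rightarrow> real) \<Rightarrow> ('i \<Rightarrow> real)" where
  "mat_vec S M v = (\<lambda>x. if x \<in> S then (\<Sum>y\<in>S. M x y * v y) else 0)"

definition eigenspace_on :: "'i set \<Rightarrow> ('i \<Rightarrow> 'i \<Rightarrow> real) \<Rightarrow> real \<Rightarrow> ('i \<Rightarrow> real) set" where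
  "eigenspace_on S M \<theta> = {v. vec_on S v \<and> mat_vec S M v = (\<lambda>x. \<theta> * v x)}"

definition orth_proj :: "'i set \<Rightarrow> ('i \<Rightarrow> real) set \<Rightarrow> ('i \<Rightarrow> real) \<Rightarrow> ('i \<Rightarrow> real)" where
  "orth_proj S W h = (THE p. p \<in> W \<and> (\<forall>w\<in>W. inner_on S (\<lambda>x. h x - p x) w = 0))"

definition line_proj :: "'a set set \<Rightarrow> real \<Rightarrow> ('a set \<Rightarrow> real) \<Rightarrow> ('a set \<Rightarrow> real)" where
  "line_proj E \<theta> h = orth_proj E (eigenspace_on E (line_adj E) \<theta>) h"

definition std_basis :: "'i \<Rightarrow> ('i \<Rightarrow> real)" where
  "std_basis \<epsilon> = (\<lambda>e. if e = \<epsilon> then 1 else 0)"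

definition eig_support :: "'a set set \<Rightarrow> ('a set \<Rightarrow> real) \<Rightarrow> real set" where
  "eig_support E f = {\<theta>. line_proj E \<theta> f \<noteq> (\<lambda>_. 0)}"

definition case_i_base :: "'a set \<Rightarrow> 'a set set \<Rightarrow> 'b set \<Rightarrow> 'b set set \<Rightarrow> ('a \<times> 'b) set \<Rightarrow> ('a \<times> 'b) set \<Rightarrow> bool" where
  "case_i_base V1 E1 V2 E2 \<epsilon>1 \<epsilon>2 \<longleftrightarrow>
     (\<exists>u v. u \<noteq> v \<and> V2 = {u, v} \<and> E2 = {{u, v}} \<and>
        (\<exists>a b. {a, b} \<in> E1 \<and> -2 \<notin> eig_support E1 (std_basis {a, b}) \<and>
               \<epsilon>1 = {(a, u), (b, u)} \<and> \<epsilon>2 = {(a, v), (b, v)}))"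

definition case_i_swap :: "'a set \<Rightarrow> 'a set set \<Rightarrow> 'b set \<Rightarrow> 'b set set \<Rightarrow> ('a \<times> 'b) set \<Rightarrow> ('a \<times> 'b) set \<Rightarrow> bool" where
  "case_i_swap V1 E1 V2 E2 \<epsilon>1 \<epsilon>2 \<longleftrightarrow>
     (\<exists>u v. u \<noteq> v \<and> V1 = {u, v} \<and> E1 = {{u, v}} \<and>
        (\<exists>a b. {a, b} \<in> E2 \<and> -2 \<notin> eig_support E2 (std_basis {a, b}) \<and>
               \<epsilon>1 = {(u, a), (u, b)} \<and> \<epsilon>2 = {(v, a), (v, b)}))"

definition case_i :: "'a set \<Rightarrow> 'a set set \<Rightarrow> 'b set \<Rightarrow> 'b set set \<Rightarrow> ('a \<times> 'b) set \<Rightarrow> ('a \<times> 'b) set \<Rightarrow> bool" where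
  "case_i V1 E1 V2 E2 \<epsilon>1 \<epsilon>2 \<longleftrightarrow>
     case_i_base V1 E1 V2 E2 \<epsilon>1 \<epsilon>2 \<or> case_i_base V1 E1 V2 E2 \<epsilon>2 \<epsilon>1 \<or>
     case_i_swap V1 E1 V2 E2 \<epsilon>1 \<epsilon>2 \<or> case_i_swap V1 E1 V2 E2 \<epsilon>2 \<epsilon>1"

definition case_ii_base :: "'a set \<Rightarrow> 'a set set \<Rightarrow> 'b set \<Rightarrow> 'b set set \<Rightarrow> ('a \<times> 'b) set \<Rightarrow> ('a \<times> 'b) set \<Rightarrow> bool" where
  "case_ii_base V1 E1 V2 E2 \<epsilon>1 \<epsilon>2 \<longleftrightarrow>
     (\<exists>a b \<alpha> \<beta>. pendant V1 E1 a \<and> {a, b} \<in> E1 \<and> pendant V2 E2 \<alpha> \<and> {\<alpha>, \<beta>} \<in> E2 \<and>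
        -2 \<notin> eig_support E1 (std_basis {a, b}) \<and> -2 \<notin> eig_support E2 (std_basis {\<alpha>, \<beta>}) \<and>
        \<epsilon>1 = {(a, \<alpha>), (a, \<beta>)} \<and> \<epsilon>2 = {(a, \<alpha>), (b, \<alpha>)})"

(* Case (ii), second orientation: interchanging the roles of X1 and X2 is, in the
   coordinates of X1 \<box> X2, the same as interchanging eps1 and eps2 *)
definition case_ii :: "'a set \<Rightarrow> 'a set set \<Rightarrow> 'b set \<Rightarrow> 'b set set \<Rightarrow> ('a \<times> 'b) set \<Rightarrow> ('a \<times> 'b) set \<Rightarrow> bool" where
  "case_ii V1 E1 V2 E2 \<epsilon>1 \<epsilon>2 \<longleftrightarrow>
     case_ii_base V1 E1 V2 E2 \<epsilon>1 \<epsilon>2 \<or> case_ii_base V1 E1 V2 E2 \<epsilon>2 \<epsilon>1"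

end

theory Submission
  imports Defs
begin


definition lin :: "('i \<Rightarrow> real) set \<Rightarrow> bool" where
  "lin W \<longleftrightarrow> (\<lambda>_. 0) \<in> W \<and> (\<forall>u\<in>W. \<forall>v\<in>W. (\<lambda>x. u x + v x) \<in> W) \<and> (\<forall>c. \<forall>u\<in>W. (\<lambda>x. c * u x) \<in> W)"

lemma lin_diff: "lin W \<Longrightarrow> u \<in> W \<Longrightarrow> v \<in> W \<Longrightarrow> (\<lambda>x. u x - v x) \<in> W"
proof -
  assume l: "lin W" and u: "u \<in> W" and v: "v \<in> W"
  have vm: "(\<lambda>x. (-1) * v x) \<in> W" using l v unfolding lin_def by blast
  have add: "\<forall>u\<in>W. \<forall>v\<in>W. (\<lambda>x. u x + v x) \<in> W" using l unfolding lin_def by blast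
  have "(\<lambda>x. u x + (\<lambda>x. (-1) * v x) x) \<in> W" using bspec[OF bspec[OF add u] vm] .
  then show ?thesis by simp
qed

lemma lin_add: "lin W \<Longrightarrow> u \<in> W \<Longrightarrow> v \<in> W \<Longrightarrow> (\<lambda>x. u x + v x) \<in> W"
  unfolding lin_def by blast
lemma lin_scale: "lin W \<Longrightarrow> u \<in> W \<Longrightarrow> (\<lambda>x. c * u x) \<in> W"
  unfolding lin_def by blast
lemma lin_zero: "lin W \<Longrightarrow> (\<lambda>_. 0) \<in> W"
  unfolding lin_def by blast

lemma inner_add_left: "inner_on S (\<lambda>x. u x + v x) w = inner_on S u w + inner_on S v w"
  unfolding inner_on_def by (simp add: algebra_simps sum.distrib)
lemma inner_diff_left: "inner_on S (\<lambda>x. u x - v x) w = inner_on S u w - inner_on S v w"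
  unfolding inner_on_def by (simp add: algebra_simps sum_subtractf)
lemma inner_scale_left: "inner_on S (\<lambda>x. c * u x) w = c * inner_on S u w"
  unfolding inner_on_def by (simp add: algebra_simps sum_distrib_left)
lemma inner_add_right: "inner_on S w (\<lambda>x. u x + v x) = inner_on S w u + inner_on S w v"
  unfolding inner_on_def by (simp add: algebra_simps sum.distrib)
lemma inner_diff_right: "inner_on S w (\<lambda>x. u x - v x) = inner_on S w u - inner_on S w v"
  unfolding inner_on_def by (simp add: algebra_simps sum_subtractf)
lemma inner_scale_right: "inner_on S w (\<lambda>x. c * u x) = c * inner_on S w u"
  unfolding inner_on_def by (simp add: algebra_simps sum_distrib_left)
lemma inner_comm: "inner_on S u v = inner_on S v u"
  unfolding inner_on_def by (simp add: mult.commute)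

lemma inner_self_zero:
  assumes "finite S" "inner_on S u u = 0" "x \<in> S" shows "u x = 0"
proof -
  have "\<forall>y\<in>S. u y * u y = 0"
    using assms(1,2) unfolding inner_on_def by (subst sum_nonneg_eq_0_iff[symmetric]) auto
  then show ?thesis using assms(3) by auto
qed

lemma inner_self_pos:
  assumes "finite S" "x \<in> S" "u x \<noteq> 0" shows "inner_on S u u > 0"
proof -
  have "inner_on S u u \<ge> 0" unfolding inner_on_def by (simp add: sum_nonneg)
  moreover have "inner_on S u u \<noteq> 0" using inner_self_zero[OF assms(1) _ assms(2)] assms(3) by blast
  ultimately show ?thesis by simp
qed

lemma proj_exists_gen:
  assumes S: "finite S" and T: "finite T"
  shows "T \<subseteq> S \<Longrightarrow> lin W \<Longrightarrow> (\<forall>w\<in>W. vec_on T w) \<Longrightarrow>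
     \<exists>p\<in>W. \<forall>w\<in>W. inner_on S (\<lambda>x. h x - p x) w = 0"
  using T
proof (induction T arbitrary: W h rule: finite_induct)
  case empty
  then have "\<forall>w\<in>W. w = (\<lambda>_. 0)" unfolding vec_on_def by auto
  then have "\<forall>w\<in>W. inner_on S (\<lambda>x. h x - 0) w = 0" unfolding inner_on_def by auto
  then show ?case using lin_zero[OF empty(2)] by (intro bexI[where x="\<lambda>_. 0"]) simp_all
next
  case (insert t T)
  define W0 where "W0 = {w\<in>W. w t = 0}"
  have l0: "lin W0" using insert.prems(2) unfolding W0_def lin_def by auto
  have s0: "\<forall>w\<in>W0. vec_on T w" using insert.prems(3) unfolding W0_def vec_on_def by auto
  have TS: "T \<subseteq> S" using insert.prems(1) by auto
  have IH: "\<And>h. \<exists>p\<in>W0. \<forall>w\<in>W0. inner_on S (\<lambda>x. h x - p x) w = 0"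
    using insert.IH[OF TS l0 s0] by blast
  show ?case
  proof (cases "\<forall>w\<in>W. w t = 0")
    case True
    then have "W0 = W" unfolding W0_def by auto
    then show ?thesis using IH[of h] by auto
  next
    case False
    then obtain b where b: "b \<in> W" "b t \<noteq> 0" by auto
    obtain q where q: "q \<in> W0" "\<forall>w\<in>W0. inner_on S (\<lambda>x. b x - q x) w = 0" using IH[of b] by blast
    define c where "c = (\<lambda>x. b x - q x)"
    have cW: "c \<in> W" unfolding c_def using lin_diff[OF insert.prems(2) b(1)] q(1) W0_def by auto
    have ct: "c t \<noteq> 0" using q(1) b(2) unfolding W0_def c_def by auto
    have cw0: "\<forall>w\<in>W0. inner_on S c w = 0" using q(2) unfolding c_def by auto
    have cc: "inner_on S c c > 0" using inner_self_pos[OF S, of t c] ct insert.prems(1) by auto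
    obtain p0 where p0: "p0 \<in> W0" "\<forall>w\<in>W0. inner_on S (\<lambda>x. h x - p0 x) w = 0" using IH[of h] by blast
    define lam where "lam = inner_on S (\<lambda>x. h x - p0 x) c / inner_on S c c"
    define p where "p = (\<lambda>x. p0 x + lam * c x)"
    have pW: "p \<in> W" unfolding p_def using p0(1) W0_def lin_add[OF insert.prems(2)] lin_scale[OF insert.prems(2) cW] by auto
    have hp: "(\<lambda>x. h x - p x) = (\<lambda>x. (h x - p0 x) - lam * c x)" unfolding p_def by (auto simp: algebra_simps)
    have hpc: "inner_on S (\<lambda>x. h x - p x) c = 0"
      unfolding hp inner_diff_left inner_scale_left lam_def using cc by simp
    have hpw0: "inner_on S (\<lambda>x. h x - p x) w = 0" if "w \<in> W0" for w
      unfolding hp inner_diff_left inner_scale_left using p0(2) that cw0 inner_comm[of S c w] by (simp add: inner_diff_left)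
    have "inner_on S (\<lambda>x. h x - p x) w = 0" if w: "w \<in> W" for w
    proof -
      define mu where "mu = w t / c t"
      define w0 where "w0 = (\<lambda>x. w x - mu * c x)"
      have "w0 \<in> W" unfolding w0_def using lin_diff[OF insert.prems(2) w lin_scale[OF insert.prems(2) cW]] by simp
      moreover have "w0 t = 0" unfolding w0_def mu_def using ct by simp
      ultimately have w0: "w0 \<in> W0" unfolding W0_def by auto
      have "w = (\<lambda>x. w0 x + mu * c x)" unfolding w0_def by auto
      then have "inner_on S (\<lambda>x. h x - p x) w = inner_on S (\<lambda>x. h x - p x) w0 + mu * inner_on S (\<lambda>x. h x - p x) c"
        by (metis inner_add_right inner_scale_right)
      then show ?thesis using hpc hpw0[OF w0] by simp
    qed
    then show ?thesis using pW by blast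
  qed
qed

lemma proj_unique:
  assumes S: "finite S" and l: "lin W" and sup: "\<forall>w\<in>W. vec_on S w"
    and p: "p \<in> W" "\<forall>w\<in>W. inner_on S (\<lambda>x. h x - p x) w = 0"
    and p': "p' \<in> W" "\<forall>w\<in>W. inner_on S (\<lambda>x. h x - p' x) w = 0"
  shows "p = p'"
proof -
  define d where "d = (\<lambda>x. p x - p' x)"
  have dW: "d \<in> W" unfolding d_def using lin_diff[OF l p(1) p'(1)] .
  have "(\<lambda>x. h x - p' x) = (\<lambda>x. (h x - p x) + d x)" unfolding d_def by auto
  then have "inner_on S d d = 0" using p(2) p'(2) dW inner_add_left[of S "\<lambda>x. h x - p x" d d] by simp
  then have "\<forall>x\<in>S. d x = 0" using inner_self_zero[OF S] by blast
  moreover have "\<forall>x. x \<notin> S \<longrightarrow> d x = 0" proof (intro allI impI)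
    fix x assume "x \<notin> S"
    then have "p x = 0" "p' x = 0" using sup p(1) p'(1) unfolding vec_on_def by blast+
    then show "d x = 0" unfolding d_def by simp
  qed
  ultimately show ?thesis unfolding d_def by (metis eq_iff_diff_eq_0 ext)
qed

lemma orth_proj_char:
  assumes S: "finite S" and l: "lin W" and sup: "\<forall>w\<in>W. vec_on S w"
  shows "orth_proj S W h = q \<longleftrightarrow> q \<in> W \<and> (\<forall>w\<in>W. inner_on S (\<lambda>x. h x - q x) w = 0)"
proof -
  obtain p where p: "p \<in> W" "\<forall>w\<in>W. inner_on S (\<lambda>x. h x - p x) w = 0"
    using proj_exists_gen[OF S S order_refl l sup] by blast
  have "orth_proj S W h = p" unfolding orth_proj_def
    by (rule the_equality) (use p proj_unique[OF S l sup] in blast)+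
  then show ?thesis using p proj_unique[OF S l sup p] by blast
qed




definition vsum :: "'a set set \<Rightarrow> ('a set \<Rightarrow> real) \<Rightarrow> 'a \<Rightarrow> real" where
  "vsum E w u = (\<Sum>e\<in>{e\<in>E. u \<in> e}. w e)"

definition goodE :: "'a set set \<Rightarrow> bool" where
  "goodE E \<longleftrightarrow> finite E \<and> (\<forall>e\<in>E. \<exists>x y. x \<noteq> y \<and> e = {x, y})"

definition KK :: "'a set set \<Rightarrow> ('a set \<Rightarrow> real) set" where
  "KK E = {v. vec_on E v \<and> (\<forall>u. vsum E v u = 0)}"

lemma matvec_eq:
  assumes g: "goodE E" and e: "e \<in> E" "e = {x, y}" "x \<noteq> y"
  shows "mat_vec E (line_adj E) v e = vsum E v x + vsum E v y - 2 * v e"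
proof -
  have fin: "finite E" using g unfolding goodE_def by auto
  define A where "A = {e'\<in>E. x \<in> e'}"
  define B where "B = {e'\<in>E. y \<in> e'}"
  define C where "C = {e'\<in>E. e' \<noteq> e \<and> e \<inter> e' \<noteq> {}}"
  have AB: "A \<inter> B = {e}"
  proof
    show "A \<inter> B \<subseteq> {e}"
    proof
      fix e' assume "e' \<in> A \<inter> B"
      then have "e' \<in> E" "x \<in> e'" "y \<in> e'" unfolding A_def B_def by auto
      moreover obtain p q where "e' = {p, q}" using g \<open>e' \<in> E\<close> unfolding goodE_def by blast
      ultimately show "e' \<in> {e}" using e by auto
    qed
    show "{e} \<subseteq> A \<inter> B" using e unfolding A_def B_def by auto
  qed
  have AuB: "A \<union> B = insert e C" using e unfolding A_def B_def C_def by auto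
  have eC: "e \<notin> C" unfolding C_def by auto
  have fA: "finite A" "finite B" "finite C" using fin unfolding A_def B_def C_def by auto
  have "vsum E v x + vsum E v y = sum v A + sum v B" unfolding vsum_def A_def B_def by simp
  also have "\<dots> = sum v (A \<union> B) + sum v (A \<inter> B)" using sum.union_inter[OF fA(1,2), of v] by simp
  also have "\<dots> = sum v C + 2 * v e" using AuB AB eC fA(3) by simp
  finally have 1: "vsum E v x + vsum E v y = sum v C + 2 * v e" .
  have "mat_vec E (line_adj E) v e = (\<Sum>e'\<in>E. line_adj E e e' * v e')" unfolding mat_vec_def using e by simp
  also have "\<dots> = (\<Sum>e'\<in>E. if e' \<noteq> e \<and> e \<inter> e' \<noteq> {} then v e' else 0)"
    using e(1) by (intro sum.cong) (auto simp: line_adj_def)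
  also have "\<dots> = sum v C" unfolding C_def using sum.inter_filter[OF fin, symmetric] by simp
  finally show ?thesis using 1 by simp
qed

lemma eig_iff:
  assumes g: "goodE E"
  shows "eigenspace_on E (line_adj E) (-2) = KK E"
proof -
  have fin: "finite E" using g unfolding goodE_def by auto
  have key: "v \<in> eigenspace_on E (line_adj E) (-2) \<longleftrightarrow>
     vec_on E v \<and> (\<forall>e\<in>E. \<forall>x y. e = {x, y} \<and> x \<noteq> y \<longrightarrow> vsum E v x + vsum E v y = 0)" for v
  proof
    assume v: "v \<in> eigenspace_on E (line_adj E) (-2)"
    then have ve: "vec_on E v" and eq: "mat_vec E (line_adj E) v = (\<lambda>x. -2 * v x)" unfolding eigenspace_on_def by auto
    have "vsum E v x + vsum E v y = 0" if "e \<in> E" "e = {x, y}" "x \<noteq> y" for e x y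
      using matvec_eq[OF g that, of v] fun_cong[OF eq, of e] by simp
    then show "vec_on E v \<and> (\<forall>e\<in>E. \<forall>x y. e = {x, y} \<and> x \<noteq> y \<longrightarrow> vsum E v x + vsum E v y = 0)" using ve by blast
  next
    assume H: "vec_on E v \<and> (\<forall>e\<in>E. \<forall>x y. e = {x, y} \<and> x \<noteq> y \<longrightarrow> vsum E v x + vsum E v y = 0)"
    have "mat_vec E (line_adj E) v e = -2 * v e" for e
    proof (cases "e \<in> E")
      case True
      then obtain x y where "x \<noteq> y" "e = {x, y}" using g unfolding goodE_def by blast
      then show ?thesis using matvec_eq[OF g True, of x y v] H True by auto
    next
      case False then show ?thesis using H unfolding mat_vec_def vec_on_def by auto
    qed
    then show "v \<in> eigenspace_on E (line_adj E) (-2)" using H unfolding eigenspace_on_def by auto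
  qed
  have "v \<in> KK E" if v: "v \<in> eigenspace_on E (line_adj E) (-2)" for v
  proof -
    define U where "U = \<Union>E"
    have fU: "finite U" unfolding U_def using g unfolding goodE_def by auto
    have H: "vec_on E v" "\<forall>e\<in>E. \<forall>x y. e = {x, y} \<and> x \<noteq> y \<longrightarrow> vsum E v x + vsum E v y = 0"
      using key v by auto
    have inner0: "(\<Sum>u\<in>{u\<in>U. u \<in> e}. vsum E v u) = 0" if "e \<in> E" for e
    proof -
      obtain x y where xy: "x \<noteq> y" "e = {x, y}" using g \<open>e\<in>E\<close> unfolding goodE_def by blast
      have "{u\<in>U. u \<in> e} = {x, y}" using xy that unfolding U_def by auto
      then show ?thesis using xy H(2) that by simp
    qed
    have "0 = (\<Sum>e\<in>E. v e * (\<Sum>u\<in>{u\<in>U. u \<in> e}. vsum E v u))" using inner0 by simp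
    also have "\<dots> = (\<Sum>e\<in>E. (\<Sum>u\<in>{u\<in>U. u \<in> e}. v e * vsum E v u))" by (simp add: sum_distrib_left)
    also have "\<dots> = (\<Sum>u\<in>U. (\<Sum>e\<in>{e\<in>E. u \<in> e}. v e * vsum E v u))"
      by (rule sum.swap_restrict[OF fin fU])
    also have "\<dots> = (\<Sum>u\<in>U. vsum E v u * vsum E v u)"
      by (simp add: vsum_def sum_distrib_right)
    finally have "(\<Sum>u\<in>U. vsum E v u * vsum E v u) = 0" by simp
    then have U0: "\<forall>u\<in>U. vsum E v u * vsum E v u = 0"
      using sum_nonneg_eq_0_iff[OF fU, of "\<lambda>u. vsum E v u * vsum E v u"] by simp
    have "vsum E v u = 0" for u
    proof (cases "u \<in> U")
      case True then show ?thesis using U0 by auto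
    next
      case False
      then have emp: "{e\<in>E. u \<in> e} = {}" unfolding U_def by auto
      show ?thesis unfolding vsum_def emp by simp
    qed
    then show ?thesis using H(1) unfolding KK_def by auto
  qed
  moreover have "v \<in> eigenspace_on E (line_adj E) (-2)" if v: "v \<in> KK E" for v
    using v key unfolding KK_def by auto
  ultimately show ?thesis by blast
qed

lemma vsum_add: "vsum E (\<lambda>e. u e + v e) x = vsum E u x + vsum E v x"
  unfolding vsum_def by (simp add: sum.distrib)
lemma vsum_scale: "vsum E (\<lambda>e. c * u e) x = c * vsum E u x"
  unfolding vsum_def by (simp add: sum_distrib_left)
lemma vsum_diff: "vsum E (\<lambda>e. u e - v e) x = vsum E u x - vsum E v x"
  unfolding vsum_def by (simp add: sum_subtractf)

lemma vsum_zero: "vsum E (\<lambda>_. 0) x = 0" unfolding vsum_def by simp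

lemma lin_KK: "lin (KK E)"
  unfolding lin_def KK_def vec_on_def by (auto simp: vsum_add vsum_scale vsum_zero)

lemma KK_vec: "\<forall>w\<in>KK E. vec_on E w" unfolding KK_def by auto

lemma line_proj_scale:
  assumes g: "goodE E"
  shows "line_proj E (-2) h1 = (\<lambda>x. c * line_proj E (-2) h2 x) \<longleftrightarrow>
     (\<forall>w\<in>KK E. inner_on E h1 w = c * inner_on E h2 w)"
proof -
  have fin: "finite E" using g unfolding goodE_def by auto
  note ch = orth_proj_char[OF fin lin_KK KK_vec]
  have LP: "line_proj E (-2) h = orth_proj E (KK E) h" for h unfolding line_proj_def eig_iff[OF g] ..
  define p2 where "p2 = orth_proj E (KK E) h2"
  have p2: "p2 \<in> KK E" "\<forall>w\<in>KK E. inner_on E (\<lambda>x. h2 x - p2 x) w = 0" using ch[of h2 p2] p2_def by auto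
  have i2: "inner_on E p2 w = inner_on E h2 w" if "w \<in> KK E" for w
    using p2(2) that by (simp add: inner_diff_left)
  have cp: "(\<lambda>x. c * p2 x) \<in> KK E" using lin_scale[OF lin_KK p2(1)] .
  show ?thesis unfolding LP p2_def[symmetric]
    unfolding ch[of h1 "\<lambda>x. c * p2 x"] using cp i2 by (auto simp: inner_diff_left inner_scale_left)
qed

lemma inner_std: "finite E \<Longrightarrow> \<epsilon> \<in> E \<Longrightarrow> inner_on E (std_basis \<epsilon>) w = w \<epsilon>"
proof -
  assume f: "finite E" and e: "\<epsilon> \<in> E"
  have "(\<Sum>x\<in>E. (if x = \<epsilon> then 1 else 0) * w x) = (\<Sum>x\<in>E. if x = \<epsilon> then w x else 0)"
    by (intro sum.cong) auto
  then show ?thesis unfolding inner_on_def std_basis_def using f e by simp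
qed

lemma proj_eq_iff:
  assumes g: "goodE E" and e: "\<epsilon>1 \<in> E" "\<epsilon>2 \<in> E"
  shows "line_proj E (-2) (std_basis \<epsilon>1) = (\<lambda>x. c * line_proj E (-2) (std_basis \<epsilon>2) x) \<longleftrightarrow>
     (\<forall>w\<in>KK E. w \<epsilon>1 = c * w \<epsilon>2)"
proof -
  have f: "finite E" using g unfolding goodE_def by auto
  show ?thesis using line_proj_scale[OF g] inner_std[OF f e(1)] inner_std[OF f e(2)] by simp
qed

lemma proj_zero_iff:
  assumes g: "goodE E" and e: "\<epsilon>1 \<in> E"
  shows "line_proj E (-2) (std_basis \<epsilon>1) = (\<lambda>x. 0) \<longleftrightarrow> (\<forall>w\<in>KK E. w \<epsilon>1 = 0)"
  using proj_eq_iff[OF g e e, of 0] by simp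

lemma supp_iff:
  assumes g: "goodE E" and e: "\<epsilon>1 \<in> E"
  shows "-2 \<notin> eig_support E (std_basis \<epsilon>1) \<longleftrightarrow> (\<forall>w\<in>KK E. w \<epsilon>1 = 0)"
  using proj_zero_iff[OF g e] unfolding eig_support_def by simp




lemma graph_edge: "is_graph V E \<Longrightarrow> {x, y} \<in> E \<Longrightarrow> x \<noteq> y \<and> x \<in> V \<and> y \<in> V"
  unfolding is_graph_def by (metis doubleton_eq_iff)

lemma graph_goodE: "is_graph V E \<Longrightarrow> goodE E"
proof -
  assume g: "is_graph V E"
  have "E \<subseteq> Pow V" using g unfolding is_graph_def by auto
  moreover have "finite V" using g unfolding is_graph_def by auto
  ultimately have "finite E" by (meson finite_Pow_iff finite_subset)
  then show ?thesis using g unfolding is_graph_def goodE_def by blast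
qed

lemma vsum_std: "finite E \<Longrightarrow> e0 \<in> E \<Longrightarrow> vsum E (std_basis e0) u = (if u \<in> e0 then 1 else 0)"
proof -
  assume f: "finite E" and e0: "e0 \<in> E"
  have f2: "finite {e\<in>E. u \<in> e}" using f by simp
  show ?thesis unfolding vsum_def std_basis_def using sum.delta[OF f2, of e0 "\<lambda>_. 1::real"] e0 by simp
qed

lemma pendant_unique:
  assumes "pendant V E a" "{a, b} \<in> E" "{a, c} \<in> E" shows "c = b"
proof -
  have "card {y. {a, y} \<in> E} = Suc 0" using assms(1) unfolding pendant_def degree_def by auto
  from card_1_singleton_iff[THEN iffD1, OF this] obtain z where z: "{y. {a, y} \<in> E} = {z}" by (elim exE)
  have "b \<in> {y. {a, y} \<in> E}" "c \<in> {y. {a, y} \<in> E}" using assms(2,3) by simp_all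
  then show ?thesis unfolding z by simp
qed

lemma pendant_intro:
  assumes "a \<in> V" "{a, b} \<in> E" "\<forall>c. {a, c} \<in> E \<longrightarrow> c = b" shows "pendant V E a"
proof -
  have "{y. {a, y} \<in> E} = {b}"
  proof (intro set_eqI iffI)
    fix y assume "y \<in> {y. {a, y} \<in> E}"
    then have "y = b" using assms(3) by simp
    then show "y \<in> {b}" by simp
  next
    fix y assume "y \<in> {b}"
    then show "y \<in> {y. {a, y} \<in> E}" using assms(2) by simp
  qed
  then show ?thesis using assms(1) unfolding pendant_def degree_def by simp
qed

lemma pendant_K:
  assumes g: "is_graph V E" and p: "pendant V E a" and ab: "{a, b} \<in> E" and w: "w \<in> KK E"
  shows "w {a, b} = 0"
proof -
  have "{e\<in>E. a \<in> e} = {{a, b}}"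
  proof
    show "{e\<in>E. a \<in> e} \<subseteq> {{a, b}}"
    proof
      fix e assume e: "e \<in> {e\<in>E. a \<in> e}"
      then obtain p q where pq: "e = {p, q}" using g unfolding is_graph_def by blast
      have eE: "e \<in> E" "a \<in> e" using e by auto
      show "e \<in> {{a, b}}"
      proof (cases "p = a")
        case True
        then have "{a, q} \<in> E" using eE pq by simp
        then have "q = b" using pendant_unique[OF p ab] by blast
        then show ?thesis using pq True by simp
      next
        case False
        then have "q = a" using eE pq by auto
        then have "{a, p} \<in> E" using eE pq by (simp add: insert_commute)
        then have "p = b" using pendant_unique[OF p ab] by blast
        then show ?thesis using pq \<open>q = a\<close> by (simp add: insert_commute)
      qed
    qed
  qed (use ab in auto)
  then have "vsum E w a = w {a, b}" unfolding vsum_def by simp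
  then show ?thesis using w unfolding KK_def by auto
qed

lemma neighbor_exists:
  assumes c: "connected_graph V E" and card: "card V \<ge> 2" and x: "x \<in> V"
  shows "\<exists>b. {x, b} \<in> E"
proof -
  have fin: "finite V" using c unfolding connected_graph_def is_graph_def by auto
  obtain z where z: "z \<in> V" "z \<noteq> x"
  proof -
    have "\<not> V \<subseteq> {x}"
    proof
      assume "V \<subseteq> {x}"
      then have "card V \<le> card {x}" by (rule card_mono[rotated]) simp
      then show False using card by simp
    qed
    then show ?thesis using that by blast
  qed
  have "(adj E)\<^sup>*\<^sup>* x z" using c x z unfolding connected_graph_def by auto
  then show ?thesis
  proof (cases rule: converse_rtranclpE)
    case base then show ?thesis using z(2) by simp
  next
    case (step b) then show ?thesis unfolding adj_def by blast
  qed
qed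

lemma two_vertex:
  assumes c: "connected_graph V E" and xb: "{x, b} \<in> E"
    and hx: "\<forall>c. {x, c} \<in> E \<longrightarrow> c = b" and hb: "\<forall>c. {b, c} \<in> E \<longrightarrow> c = x"
  shows "V = {x, b} \<and> E = {{x, b}}"
proof -
  have g: "is_graph V E" using c unfolding connected_graph_def by auto
  have xV: "x \<in> V" "b \<in> V" "x \<noteq> b" using graph_edge[OF g xb] by auto
  have "z \<in> {x, b}" if z: "z \<in> V" for z
  proof -
    have "(adj E)\<^sup>*\<^sup>* x z" using c xV z unfolding connected_graph_def by auto
    then show ?thesis
    proof (induction rule: rtranclp_induct)
      case base then show ?case by simp
    next
      case (step y z)
      then have "{y, z} \<in> E" unfolding adj_def by auto
      show ?case
      proof (cases "y = x")
        case True
        then have "z = b" using hx \<open>{y, z} \<in> E\<close> by blast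
        then show ?thesis by simp
      next
        case False
        then have "y = b" using step(3) by simp
        then have "z = x" using hb \<open>{y, z} \<in> E\<close> by blast
        then show ?thesis by simp
      qed
    qed
  qed
  then have V: "V = {x, b}" using xV by auto
  have "e = {x, b}" if e: "e \<in> E" for e
  proof -
    obtain p q where pq: "p \<in> V" "q \<in> V" "p \<noteq> q" "e = {p, q}" using g e unfolding is_graph_def by blast
    have "p = x \<or> p = b" "q = x \<or> q = b" using pq(1,2) V by auto
    then show ?thesis using pq(3,4) by (auto simp: insert_commute)
  qed
  then have "E = {{x, b}}" using xb by blast
  then show ?thesis using V by simp
qed

locale GG =
  fixes V1 :: "'a set" and E1 :: "'a set set" and V2 :: "'b set" and E2 :: "'b set set"
  assumes g1: "is_graph V1 E1" and g2: "is_graph V2 E2"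
begin

abbreviation "E \<equiv> cart_E V1 E1 V2 E2"

lemma cartE_cases:
  assumes "e \<in> E"
  obtains x y y' where "e = {(x, y), (x, y')}" "x \<in> V1" "{y, y'} \<in> E2"
    | x x' y where "e = {(x, y), (x', y)}" "y \<in> V2" "{x, x'} \<in> E1"
  using assms unfolding cart_E_def by blast

lemma T2_mem: "x \<in> V1 \<Longrightarrow> {y, y'} \<in> E2 \<Longrightarrow> {(x, y), (x, y')} \<in> E"
  unfolding cart_E_def by blast
lemma T1_mem: "y \<in> V2 \<Longrightarrow> {x, x'} \<in> E1 \<Longrightarrow> {(x, y), (x', y)} \<in> E"
  unfolding cart_E_def by blast

lemma goodE_cart: "goodE E"
proof -
  have sub: "E \<subseteq> Pow (V1 \<times> V2)"
  proof
    fix e assume "e \<in> E"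
    then show "e \<in> Pow (V1 \<times> V2)"
      by (cases rule: cartE_cases) (auto dest: graph_edge[OF g1] graph_edge[OF g2])
  qed
  have "finite V1" "finite V2" using g1 g2 unfolding is_graph_def by auto
  then have "finite E" using sub by (meson finite_Pow_iff finite_SigmaI finite_subset)
  moreover have "\<exists>x y. x \<noteq> y \<and> e = {x, y}" if "e \<in> E" for e
    using that
  proof (cases rule: cartE_cases)
    case (1 x y y')
    then have "y \<noteq> y'" using graph_edge[OF g2] by blast
    then show ?thesis using 1(1) by (intro exI[of _ "(x, y)"] exI[of _ "(x, y')"]) auto
  next
    case (2 x x' y)
    then have "x \<noteq> x'" using graph_edge[OF g1] by blast
    then show ?thesis using 2(1) by (intro exI[of _ "(x, y)"] exI[of _ "(x', y)"]) auto
  qed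
  ultimately show ?thesis unfolding goodE_def by blast
qed

lemma finE: "finite E" using goodE_cart unfolding goodE_def by auto

definition sq :: "'a \<Rightarrow> 'a \<Rightarrow> 'b \<Rightarrow> 'b \<Rightarrow> ('a \<times> 'b) set \<Rightarrow> real" where
  "sq x x' y y' = (\<lambda>e. std_basis {(x, y), (x, y')} e + std_basis {(x', y), (x', y')} e
      - std_basis {(x, y), (x', y)} e - std_basis {(x, y'), (x', y')} e)"

lemma sq_K:
  assumes xx: "{x, x'} \<in> E1" and yy: "{y, y'} \<in> E2"
  shows "sq x x' y y' \<in> KK E"
proof -
  have d: "x \<noteq> x'" "x \<in> V1" "x' \<in> V1" using graph_edge[OF g1 xx] by auto
  have d2: "y \<noteq> y'" "y \<in> V2" "y' \<in> V2" using graph_edge[OF g2 yy] by auto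
  have m: "{(x, y), (x, y')} \<in> E" "{(x', y), (x', y')} \<in> E" "{(x, y), (x', y)} \<in> E" "{(x, y'), (x', y')} \<in> E"
    using T2_mem T1_mem d d2 xx yy by (auto simp: insert_commute)
  have vec: "vec_on E (sq x x' y y')" unfolding vec_on_def sq_def std_basis_def using m by auto
  have "vsum E (sq x x' y y') u = 0" for u
  proof -
    obtain p q where u: "u = (p, q)" by fastforce
    have "vsum E (sq x x' y y') u = (if u \<in> {(x, y), (x, y')} then 1 else 0) + (if u \<in> {(x', y), (x', y')} then 1 else 0)
       - (if u \<in> {(x, y), (x', y)} then 1 else 0) - (if u \<in> {(x, y'), (x', y')} then 1 else 0)"
      unfolding sq_def vsum_diff vsum_add vsum_std[OF finE m(1)] vsum_std[OF finE m(2)]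
        vsum_std[OF finE m(3)] vsum_std[OF finE m(4)] by simp
    also have "\<dots> = 0" using d(1) d2(1) unfolding u
      by (cases "p = x"; cases "p = x'"; cases "q = y"; cases "q = y'") simp_all
    finally show ?thesis .
  qed
  then show ?thesis using vec unfolding KK_def by auto
qed

lemma sq_val:
  assumes "x \<noteq> x'" "y \<noteq> y'"
  shows "sq x x' y y' {(x, y), (x, y')} = 1" "sq x x' y y' {(x', y), (x', y')} = 1"
    "sq x x' y y' {(x, y), (x', y)} = -1" "sq x x' y y' {(x, y'), (x', y')} = -1"
  using assms unfolding sq_def std_basis_def by (simp_all add: doubleton_eq_iff)

lemma sq_val0:
  assumes "e \<noteq> {(x, y), (x, y')}" "e \<noteq> {(x', y), (x', y')}" "e \<noteq> {(x, y), (x', y)}" "e \<noteq> {(x, y'), (x', y')}"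
  shows "sq x x' y y' e = 0"
  using assms unfolding sq_def std_basis_def by auto

end




lemma sum_if_filter: "finite A \<Longrightarrow> (\<Sum>e\<in>A. if P e then f e else 0) = (\<Sum>e\<in>{e\<in>A. P e}. f e)"
  by (simp add: sum.inter_filter)

context GG begin

definition lift2 :: "'a \<Rightarrow> ('b set \<Rightarrow> real) \<Rightarrow> ('a \<times> 'b) set \<Rightarrow> real" where
  "lift2 x w2 = (\<lambda>e. if e \<in> E \<and> fst ` e = {x} then w2 (snd ` e) else 0)"

definition lift1 :: "'b \<Rightarrow> ('a set \<Rightarrow> real) \<Rightarrow> ('a \<times> 'b) set \<Rightarrow> real" where
  "lift1 y w1 = (\<lambda>e. if e \<in> E \<and> snd ` e = {y} then w1 (fst ` e) else 0)"

lemma lift2_K: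
  assumes x: "x \<in> V1" and w2: "w2 \<in> KK E2"
  shows "lift2 x w2 \<in> KK E"
proof -
  have "vsum E (lift2 x w2) (p, q) = 0" for p q
  proof -
    define S where "S = {e\<in>E. (p, q) \<in> e \<and> fst ` e = {x}}"
    have "vsum E (lift2 x w2) (p, q) = (\<Sum>e\<in>{e\<in>E. (p, q) \<in> e}. if fst ` e = {x} then w2 (snd ` e) else 0)"
      unfolding vsum_def lift2_def by (intro sum.cong) auto
    also have "\<dots> = (\<Sum>e\<in>S. w2 (snd ` e))" unfolding S_def using finE
      by (subst sum_if_filter) (auto intro: sum.cong)
    finally have 1: "vsum E (lift2 x w2) (p, q) = (\<Sum>e\<in>S. w2 (snd ` e))" .
    show ?thesis
    proof (cases "p = x")
      case False
      have "S = {}"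
      proof (rule ccontr)
        assume "S \<noteq> {}"
        then obtain e where "(p, q) \<in> e" "fst ` e = {x}" unfolding S_def by auto
        then have "fst (p, q) \<in> {x}" by (metis imageI)
        then show False using False by simp
      qed
      then show ?thesis using 1 by simp
    next
      case True
      have SI: "S = (\<lambda>e2. Pair x ` e2) ` {e2\<in>E2. q \<in> e2}"
      proof
        show "S \<subseteq> (\<lambda>e2. Pair x ` e2) ` {e2\<in>E2. q \<in> e2}"
        proof
          fix e assume e: "e \<in> S"
          then have eE: "e \<in> E" "(x, q) \<in> e" "fst ` e = {x}" unfolding S_def using True by auto
          from eE(1) show "e \<in> (\<lambda>e2. Pair x ` e2) ` {e2\<in>E2. q \<in> e2}"
          proof (cases rule: cartE_cases)
            case (1 x' y y')
            then have "x' = x" using eE(3) by auto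
            then have "e = Pair x ` {y, y'}" "q \<in> {y, y'}" using 1 eE(2) by auto
            then show ?thesis using 1(3) by blast
          next
            case (2 x1 x2 y)
            then have "x1 \<noteq> x2" using graph_edge[OF g1] by blast
            moreover have "fst ` e = {x1, x2}" using 2 by auto
            ultimately have eq: "{x1, x2} = {x}" "x1 \<noteq> x2" using eE(3) by auto
            have "x1 \<in> {x}" "x2 \<in> {x}" by (subst eq(1)[symmetric], simp)+
            then have False using eq(2) by simp
            then show ?thesis ..
          qed
        qed
        show "(\<lambda>e2. Pair x ` e2) ` {e2\<in>E2. q \<in> e2} \<subseteq> S"
        proof
          fix e assume "e \<in> (\<lambda>e2. Pair x ` e2) ` {e2\<in>E2. q \<in> e2}"
          then obtain e2 where e2: "e2 \<in> E2" "q \<in> e2" "e = Pair x ` e2" by blast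
          obtain y y' where yy: "e2 = {y, y'}" using g2 e2(1) unfolding is_graph_def by blast
          have "e = {(x, y), (x, y')}" using e2(3) yy by simp
          then have "e \<in> E" using T2_mem[OF x, of y y'] e2(1) yy by simp
          then show "e \<in> S" unfolding S_def using True e2 yy by auto
        qed
      qed
      have inj: "inj_on (\<lambda>e2. Pair x ` e2) {e2\<in>E2. q \<in> e2}"
      proof (rule inj_onI)
        fix A B assume "Pair x ` A = Pair x ` B"
        then have "snd ` Pair x ` A = snd ` Pair x ` B" by simp
        then show "A = B" by (simp add: image_image)
      qed
      have "(\<Sum>e\<in>S. w2 (snd ` e)) = (\<Sum>e2\<in>{e2\<in>E2. q \<in> e2}. w2 (snd ` Pair x ` e2))"
        unfolding SI by (rule sum.reindex[OF inj, unfolded comp_def])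
      also have "\<dots> = vsum E2 w2 q" unfolding vsum_def by (simp add: image_image)
      finally show ?thesis using 1 w2 unfolding KK_def by simp
    qed
  qed
  moreover have "vec_on E (lift2 x w2)" unfolding vec_on_def lift2_def by auto
  ultimately show ?thesis unfolding KK_def by auto
qed

lemma lift2_val: "{(x, y), (x, y')} \<in> E \<Longrightarrow> lift2 x w2 {(x, y), (x, y')} = w2 {y, y'}"
  unfolding lift2_def by simp

lemma lift2_val0: "b \<noteq> x \<Longrightarrow> lift2 x w2 {(b, y), (b, y')} = 0"
  unfolding lift2_def by auto


lemma lift1_K:
  assumes y: "y \<in> V2" and w1: "w1 \<in> KK E1"
  shows "lift1 y w1 \<in> KK E"
proof -
  have "vsum E (lift1 y w1) (p, q) = 0" for p q
  proof -
    define S where "S = {e\<in>E. (p, q) \<in> e \<and> snd ` e = {y}}"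
    have "vsum E (lift1 y w1) (p, q) = (\<Sum>e\<in>{e\<in>E. (p, q) \<in> e}. if snd ` e = {y} then w1 (fst ` e) else 0)"
      unfolding vsum_def lift1_def by (intro sum.cong) auto
    also have "\<dots> = (\<Sum>e\<in>S. w1 (fst ` e))" unfolding S_def using finE
      by (subst sum_if_filter) (auto intro: sum.cong)
    finally have 1: "vsum E (lift1 y w1) (p, q) = (\<Sum>e\<in>S. w1 (fst ` e))" .
    show ?thesis
    proof (cases "q = y")
      case False
      have "S = {}"
      proof (rule ccontr)
        assume "S \<noteq> {}"
        then obtain e where "(p, q) \<in> e" "snd ` e = {y}" unfolding S_def by auto
        then have "snd (p, q) \<in> {y}" by (metis imageI)
        then show False using False by simp
      qed
      then show ?thesis using 1 by simp
    next
      case True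
      have SI: "S = (\<lambda>e1. (\<lambda>z. (z, y)) ` e1) ` {e1\<in>E1. p \<in> e1}"
      proof
        show "S \<subseteq> (\<lambda>e1. (\<lambda>z. (z, y)) ` e1) ` {e1\<in>E1. p \<in> e1}"
        proof
          fix e assume e: "e \<in> S"
          then have eE: "e \<in> E" "(p, y) \<in> e" "snd ` e = {y}" unfolding S_def using True by auto
          from eE(1) show "e \<in> (\<lambda>e1. (\<lambda>z. (z, y)) ` e1) ` {e1\<in>E1. p \<in> e1}"
          proof (cases rule: cartE_cases)
            case (2 x x' y')
            then have "y' = y" using eE(3) by auto
            then have "e = (\<lambda>z. (z, y)) ` {x, x'}" "p \<in> {x, x'}" using 2 eE(2) by auto
            then show ?thesis using 2(3) by blast
          next
            case (1 x y1 y2)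
            then have "y1 \<noteq> y2" using graph_edge[OF g2] by blast
            moreover have "snd ` e = {y1, y2}" using 1 by auto
            ultimately have eq: "{y1, y2} = {y}" "y1 \<noteq> y2" using eE(3) by auto
            have "y1 \<in> {y}" "y2 \<in> {y}" by (subst eq(1)[symmetric], simp)+
            then have False using eq(2) by simp
            then show ?thesis ..
          qed
        qed
        show "(\<lambda>e1. (\<lambda>z. (z, y)) ` e1) ` {e1\<in>E1. p \<in> e1} \<subseteq> S"
        proof
          fix e assume "e \<in> (\<lambda>e1. (\<lambda>z. (z, y)) ` e1) ` {e1\<in>E1. p \<in> e1}"
          then obtain e1 where e1: "e1 \<in> E1" "p \<in> e1" "e = (\<lambda>z. (z, y)) ` e1" by blast
          obtain x x' where xx: "e1 = {x, x'}" using g1 e1(1) unfolding is_graph_def by blast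
          have "e = {(x, y), (x', y)}" using e1(3) xx by simp
          then have "e \<in> E" using T1_mem[OF y, of x x'] e1(1) xx by simp
          then show "e \<in> S" unfolding S_def using True e1 xx by auto
        qed
      qed
      have inj: "inj_on (\<lambda>e1. (\<lambda>z. (z, y)) ` e1) {e1\<in>E1. p \<in> e1}"
      proof (rule inj_onI)
        fix A B assume "(\<lambda>z. (z, y)) ` A = (\<lambda>z. (z, y)) ` B"
        then have "fst ` (\<lambda>z. (z, y)) ` A = fst ` (\<lambda>z. (z, y)) ` B" by simp
        then show "A = B" by (simp add: image_image)
      qed
      have "(\<Sum>e\<in>S. w1 (fst ` e)) = (\<Sum>e1\<in>{e1\<in>E1. p \<in> e1}. w1 (fst ` (\<lambda>z. (z, y)) ` e1))"
        unfolding SI by (rule sum.reindex[OF inj, unfolded comp_def])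
      also have "\<dots> = vsum E1 w1 p" unfolding vsum_def by (simp add: image_image)
      finally show ?thesis using 1 w1 unfolding KK_def by simp
    qed
  qed
  moreover have "vec_on E (lift1 y w1)" unfolding vec_on_def lift1_def by auto
  ultimately show ?thesis unfolding KK_def by auto
qed

lemma lift1_val: "{(x, y), (x', y)} \<in> E \<Longrightarrow> lift1 y w1 {(x, y), (x', y)} = w1 {x, x'}"
  unfolding lift1_def by simp

lemma lift1_val0: "b \<noteq> y \<Longrightarrow> lift1 y w1 {(x, b), (x', b)} = 0"
  unfolding lift1_def by auto


lemma fiber1_sum:
  assumes V2: "V2 = {u, v}" and E2: "E2 = {{u, v}}" and x: "x \<in> V1" and t: "t \<in> {u, v}"
  shows "vsum E w (x, t) = (\<Sum>e1\<in>{e1\<in>E1. x \<in> e1}. w ((\<lambda>z. (z, t)) ` e1)) + w {(x, u), (x, v)}"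
proof -
  have uv: "u \<noteq> v" using graph_edge[OF g2, of u v] E2 by simp
  define R where "R = {(x, u), (x, v)}"
  define I where "I = (\<lambda>e1. (\<lambda>z. (z, t)) ` e1) ` {e1\<in>E1. x \<in> e1}"
  have tV: "t \<in> V2" using t V2 by simp
  have SI: "{e\<in>E. (x, t) \<in> e} = insert R I"
  proof
    show "{e\<in>E. (x, t) \<in> e} \<subseteq> insert R I"
    proof
      fix e assume e: "e \<in> {e\<in>E. (x, t) \<in> e}"
      then have eE: "e \<in> E" "(x, t) \<in> e" by auto
      from eE(1) show "e \<in> insert R I"
      proof (cases rule: cartE_cases)
        case (1 x' y y')
        then have "{y, y'} = {u, v}" using E2 by simp
        moreover have "x' = x" using 1(1) eE(2) by auto
        moreover have "e = Pair x ` {y, y'}" using 1(1) \<open>x' = x\<close> by simp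
        ultimately show ?thesis unfolding R_def by simp
      next
        case (2 x1 x2 y)
        then have "y = t" "x \<in> {x1, x2}" using eE(2) by auto
        then have "e = (\<lambda>z. (z, t)) ` {x1, x2}" using 2(1) by simp
        then show ?thesis unfolding I_def using 2(3) \<open>x \<in> {x1, x2}\<close> by blast
      qed
    qed
    show "insert R I \<subseteq> {e\<in>E. (x, t) \<in> e}"
    proof
      fix e assume "e \<in> insert R I"
      then show "e \<in> {e\<in>E. (x, t) \<in> e}"
      proof
        assume "e = R"
        then show ?thesis unfolding R_def using T2_mem[OF x, of u v] E2 t by auto
      next
        assume "e \<in> I"
        then obtain e1 where e1: "e1 \<in> E1" "x \<in> e1" "e = (\<lambda>z. (z, t)) ` e1" unfolding I_def by blast
        obtain x1 x2 where xx: "e1 = {x1, x2}" using g1 e1(1) unfolding is_graph_def by blast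
        have "e = {(x1, t), (x2, t)}" using e1(3) xx by simp
        then have "e \<in> E" using T1_mem[OF tV, of x1 x2] e1(1) xx by simp
        then show ?thesis using e1 xx by auto
      qed
    qed
  qed
  have RI: "R \<notin> I"
  proof
    assume "R \<in> I"
    then obtain e1 where R: "R = (\<lambda>z. (z, t)) ` e1" unfolding I_def by blast
    have "(x, u) \<in> (\<lambda>z. (z, t)) ` e1" "(x, v) \<in> (\<lambda>z. (z, t)) ` e1" using R unfolding R_def by blast+
    then have "u = t" "v = t" by auto
    then show False using uv by simp
  qed
  have fE1: "finite E1" using graph_goodE[OF g1] unfolding goodE_def by auto
  have fI: "finite I" unfolding I_def using fE1 by simp
  have inj: "inj_on (\<lambda>e1. (\<lambda>z. (z, t)) ` e1) {e1\<in>E1. x \<in> e1}"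
  proof (rule inj_onI)
    fix A B assume "(\<lambda>z. (z, t)) ` A = (\<lambda>z. (z, t)) ` B"
    then have "fst ` (\<lambda>z. (z, t)) ` A = fst ` (\<lambda>z. (z, t)) ` B" by simp
    then show "A = B" by (simp add: image_image)
  qed
  have "vsum E w (x, t) = w R + sum w I" unfolding vsum_def SI using RI fI by simp
  also have "sum w I = (\<Sum>e1\<in>{e1\<in>E1. x \<in> e1}. w ((\<lambda>z. (z, t)) ` e1))"
    unfolding I_def by (rule sum.reindex[OF inj, unfolded comp_def])
  finally show ?thesis unfolding R_def by simp
qed

definition dif1 :: "'b \<Rightarrow> 'b \<Rightarrow> (('a \<times> 'b) set \<Rightarrow> real) \<Rightarrow> 'a set \<Rightarrow> real" where
  "dif1 u v w = (\<lambda>e1. if e1 \<in> E1 then w ((\<lambda>z. (z, u)) ` e1) - w ((\<lambda>z. (z, v)) ` e1) else 0)"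

lemma dif1_K:
  assumes V2: "V2 = {u, v}" and E2: "E2 = {{u, v}}" and w: "w \<in> KK E"
  shows "dif1 u v w \<in> KK E1"
proof -
  have "vsum E1 (dif1 u v w) x = 0" for x
  proof -
    have "vsum E1 (dif1 u v w) x = (\<Sum>e1\<in>{e1\<in>E1. x \<in> e1}. w ((\<lambda>z. (z, u)) ` e1) - w ((\<lambda>z. (z, v)) ` e1))"
      unfolding vsum_def dif1_def by (intro sum.cong) auto
    also have "\<dots> = (\<Sum>e1\<in>{e1\<in>E1. x \<in> e1}. w ((\<lambda>z. (z, u)) ` e1)) - (\<Sum>e1\<in>{e1\<in>E1. x \<in> e1}. w ((\<lambda>z. (z, v)) ` e1))"
      by (rule sum_subtractf)
    also have "\<dots> = 0"
    proof (cases "x \<in> V1")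
      case True
      have "vsum E w (x, u) = 0" "vsum E w (x, v) = 0" using w unfolding KK_def by auto
      then show ?thesis using fiber1_sum[OF V2 E2 True, of u w] fiber1_sum[OF V2 E2 True, of v w] by simp
    next
      case False
      then have emp: "{e1\<in>E1. x \<in> e1} = {}" using g1 unfolding is_graph_def by auto
      show ?thesis unfolding emp by simp
    qed
    finally show ?thesis .
  qed
  moreover have "vec_on E1 (dif1 u v w)" unfolding vec_on_def dif1_def by auto
  ultimately show ?thesis unfolding KK_def by auto
qed

lemma dif1_val: "{a, b} \<in> E1 \<Longrightarrow> dif1 u v w {a, b} = w {(a, u), (b, u)} - w {(a, v), (b, v)}"
  unfolding dif1_def by simp

lemma fiber2_sum:
  assumes V1: "V1 = {u, v}" and E1: "E1 = {{u, v}}" and y: "y \<in> V2" and t: "t \<in> {u, v}"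
  shows "vsum E w (t, y) = (\<Sum>e2\<in>{e2\<in>E2. y \<in> e2}. w (Pair t ` e2)) + w {(u, y), (v, y)}"
proof -
  have uv: "u \<noteq> v" using graph_edge[OF g1, of u v] E1 by simp
  define R where "R = {(u, y), (v, y)}"
  define I where "I = (\<lambda>e2. Pair t ` e2) ` {e2\<in>E2. y \<in> e2}"
  have tV: "t \<in> V1" using t V1 by simp
  have SI: "{e\<in>E. (t, y) \<in> e} = insert R I"
  proof
    show "{e\<in>E. (t, y) \<in> e} \<subseteq> insert R I"
    proof
      fix e assume e: "e \<in> {e\<in>E. (t, y) \<in> e}"
      then have eE: "e \<in> E" "(t, y) \<in> e" by auto
      from eE(1) show "e \<in> insert R I"
      proof (cases rule: cartE_cases)
        case (2 x x' y')
        then have "{x, x'} = {u, v}" using E1 by simp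
        moreover have "y' = y" using 2(1) eE(2) by auto
        moreover have "e = (\<lambda>z. (z, y)) ` {x, x'}" using 2(1) \<open>y' = y\<close> by simp
        ultimately show ?thesis unfolding R_def by simp
      next
        case (1 x y1 y2)
        then have "x = t" "y \<in> {y1, y2}" using eE(2) by auto
        then have "e = Pair t ` {y1, y2}" using 1(1) by simp
        then show ?thesis unfolding I_def using 1(3) \<open>y \<in> {y1, y2}\<close> by blast
      qed
    qed
    show "insert R I \<subseteq> {e\<in>E. (t, y) \<in> e}"
    proof
      fix e assume "e \<in> insert R I"
      then show "e \<in> {e\<in>E. (t, y) \<in> e}"
      proof
        assume "e = R"
        then show ?thesis unfolding R_def using T1_mem[OF y, of u v] E1 t by auto
      next
        assume "e \<in> I"
        then obtain e2 where e2: "e2 \<in> E2" "y \<in> e2" "e = Pair t ` e2" unfolding I_def by blast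
        obtain y1 y2 where yy: "e2 = {y1, y2}" using g2 e2(1) unfolding is_graph_def by blast
        have "e = {(t, y1), (t, y2)}" using e2(3) yy by simp
        then have "e \<in> E" using T2_mem[OF tV, of y1 y2] e2(1) yy by simp
        then show ?thesis using e2 yy by auto
      qed
    qed
  qed
  have RI: "R \<notin> I"
  proof
    assume "R \<in> I"
    then obtain e2 where R: "R = Pair t ` e2" unfolding I_def by blast
    have "(u, y) \<in> Pair t ` e2" "(v, y) \<in> Pair t ` e2" using R unfolding R_def by blast+
    then have "u = t" "v = t" by auto
    then show False using uv by simp
  qed
  have fE2: "finite E2" using graph_goodE[OF g2] unfolding goodE_def by auto
  have fI: "finite I" unfolding I_def using fE2 by simp
  have inj: "inj_on (\<lambda>e2. Pair t ` e2) {e2\<in>E2. y \<in> e2}"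
  proof (rule inj_onI)
    fix A B assume "Pair t ` A = Pair t ` B"
    then have "snd ` Pair t ` A = snd ` Pair t ` B" by simp
    then show "A = B" by (simp add: image_image)
  qed
  have "vsum E w (t, y) = w R + sum w I" unfolding vsum_def SI using RI fI by simp
  also have "sum w I = (\<Sum>e2\<in>{e2\<in>E2. y \<in> e2}. w (Pair t ` e2))"
    unfolding I_def by (rule sum.reindex[OF inj, unfolded comp_def])
  finally show ?thesis unfolding R_def by simp
qed

definition dif2 :: "'a \<Rightarrow> 'a \<Rightarrow> (('a \<times> 'b) set \<Rightarrow> real) \<Rightarrow> 'b set \<Rightarrow> real" where
  "dif2 u v w = (\<lambda>e2. if e2 \<in> E2 then w (Pair u ` e2) - w (Pair v ` e2) else 0)"

lemma dif2_K:
  assumes V1: "V1 = {u, v}" and E1: "E1 = {{u, v}}" and w: "w \<in> KK E"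
  shows "dif2 u v w \<in> KK E2"
proof -
  have "vsum E2 (dif2 u v w) y = 0" for y
  proof -
    have "vsum E2 (dif2 u v w) y = (\<Sum>e2\<in>{e2\<in>E2. y \<in> e2}. w (Pair u ` e2) - w (Pair v ` e2))"
      unfolding vsum_def dif2_def by (intro sum.cong) auto
    also have "\<dots> = (\<Sum>e2\<in>{e2\<in>E2. y \<in> e2}. w (Pair u ` e2)) - (\<Sum>e2\<in>{e2\<in>E2. y \<in> e2}. w (Pair v ` e2))"
      by (rule sum_subtractf)
    also have "\<dots> = 0"
    proof (cases "y \<in> V2")
      case True
      have "vsum E w (u, y) = 0" "vsum E w (v, y) = 0" using w unfolding KK_def by auto
      then show ?thesis using fiber2_sum[OF V1 E1 True, of u w] fiber2_sum[OF V1 E1 True, of v w] by simp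
    next
      case False
      then have emp: "{e2\<in>E2. y \<in> e2} = {}" using g2 unfolding is_graph_def by auto
      show ?thesis unfolding emp by simp
    qed
    finally show ?thesis .
  qed
  moreover have "vec_on E2 (dif2 u v w)" unfolding vec_on_def dif2_def by auto
  ultimately show ?thesis unfolding KK_def by auto
qed

lemma dif2_val: "{a, b} \<in> E2 \<Longrightarrow> dif2 u v w {a, b} = w {(u, a), (u, b)} - w {(v, a), (v, b)}"
  unfolding dif2_def by simp

end



context GG begin

lemma sq_contains:
  assumes xc: "{x, c} \<in> E1" and yy: "{y, y'} \<in> E2"
    and s: "s = 1 \<or> s = -1" and S: "\<forall>w\<in>KK E. w \<epsilon>1 = s * w \<epsilon>2"
    and e1: "sq x c y y' \<epsilon>1 \<noteq> 0"
  shows "\<epsilon>2 = {(x, y), (x, y')} \<or> \<epsilon>2 = {(c, y), (c, y')} \<or> \<epsilon>2 = {(x, y), (c, y)} \<or> \<epsilon>2 = {(x, y'), (c, y')}"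
proof (rule ccontr)
  assume "\<not> ?thesis"
  then have "sq x c y y' \<epsilon>2 = 0" by (intro sq_val0) auto
  moreover have "sq x c y y' \<epsilon>1 = s * sq x c y y' \<epsilon>2" using S sq_K[OF xc yy] by blast
  ultimately show False using e1 by simp
qed


lemma L2B:
  assumes x: "x \<in> V1" and xb: "{x, b} \<in> E1" and yy: "{y, y'} \<in> E2" and px: "pendant V1 E1 x"
    and e1: "\<epsilon>1 = {(x, y), (x, y')}" and e2: "\<epsilon>2 = {(x, y), (b, y)}"
    and s: "s = 1 \<or> s = -1" and S: "\<forall>w\<in>KK E. w \<epsilon>1 = s * w \<epsilon>2"
  shows "case_ii_base V1 E1 V2 E2 \<epsilon>1 \<epsilon>2"
proof -
  have d: "x \<noteq> b" "y \<noteq> y'" "y \<in> V2" using graph_edge[OF g1 xb] graph_edge[OF g2 yy] by auto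
  have "sq x b y y' \<epsilon>1 = s * sq x b y y' \<epsilon>2" using S sq_K[OF xb yy] by blast
  then have sm: "s = -1" unfolding e1 e2 using sq_val[OF d(1,2)] by simp
  have yp: "z = y'" if yz: "{y, z} \<in> E2" for z
  proof (rule ccontr)
    assume zy: "z \<noteq> y'"
    have dz: "y \<noteq> z" using graph_edge[OF g2 yz] by auto
    have "sq x b y z \<epsilon>1 = s * sq x b y z \<epsilon>2" using S sq_K[OF xb yz] by blast
    moreover have "sq x b y z \<epsilon>2 = -1" unfolding e2 using sq_val[OF d(1) dz] by simp
    moreover have "sq x b y z \<epsilon>1 = 0" unfolding e1 using d zy dz
      by (intro sq_val0) (simp_all add: doubleton_eq_iff)
    ultimately show False using sm by simp
  qed
  have py: "pendant V2 E2 y" using pendant_intro[OF d(3) yy] yp by blast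
  have s1: "-2 \<notin> eig_support E1 (std_basis {x, b})"
    using supp_iff[OF graph_goodE[OF g1] xb] pendant_K[OF g1 px xb] by blast
  have s2: "-2 \<notin> eig_support E2 (std_basis {y, y'})"
    using supp_iff[OF graph_goodE[OF g2] yy] pendant_K[OF g2 py yy] by blast
  show ?thesis unfolding case_ii_base_def
    using px xb py yy s1 s2 e1 e2 by blast
qed

lemma L1B:
  assumes y: "y \<in> V2" and yb: "{y, \<beta>} \<in> E2" and xx: "{x, x'} \<in> E1" and py: "pendant V2 E2 y"
    and e1: "\<epsilon>1 = {(x, y), (x', y)}" and e2: "\<epsilon>2 = {(x, y), (x, \<beta>)}"
    and s: "s = 1 \<or> s = -1" and S: "\<forall>w\<in>KK E. w \<epsilon>1 = s * w \<epsilon>2"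
  shows "case_ii_base V1 E1 V2 E2 \<epsilon>2 \<epsilon>1"
proof -
  have d: "y \<noteq> \<beta>" "x \<noteq> x'" "x \<in> V1" using graph_edge[OF g2 yb] graph_edge[OF g1 xx] by auto
  have "sq x x' y \<beta> \<epsilon>1 = s * sq x x' y \<beta> \<epsilon>2" using S sq_K[OF xx yb] by blast
  then have sm: "s = -1" unfolding e1 e2 using sq_val[OF d(2,1)] by simp
  have xp: "z = x'" if xz: "{x, z} \<in> E1" for z
  proof (rule ccontr)
    assume zx: "z \<noteq> x'"
    have dz: "x \<noteq> z" using graph_edge[OF g1 xz] by auto
    have "sq x z y \<beta> \<epsilon>1 = s * sq x z y \<beta> \<epsilon>2" using S sq_K[OF xz yb] by blast
    moreover have "sq x z y \<beta> \<epsilon>2 = 1" unfolding e2 using sq_val[OF dz d(1)] by simp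
    moreover have "sq x z y \<beta> \<epsilon>1 = 0" unfolding e1 using d zx dz
      by (intro sq_val0) (simp_all add: doubleton_eq_iff)
    ultimately show False using sm by simp
  qed
  have px: "pendant V1 E1 x" using pendant_intro[OF d(3) xx] xp by blast
  have s1: "-2 \<notin> eig_support E1 (std_basis {x, x'})"
    using supp_iff[OF graph_goodE[OF g1] xx] pendant_K[OF g1 px xx] by blast
  have s2: "-2 \<notin> eig_support E2 (std_basis {y, \<beta>})"
    using supp_iff[OF graph_goodE[OF g2] yb] pendant_K[OF g2 py yb] by blast
  show ?thesis unfolding case_ii_base_def
    using px xx py yb s1 s2 e1 e2 by blast
qed


lemma L2:
  assumes c1: "connected_graph V1 E1" and card1: "card V1 \<ge> 2" and x: "x \<in> V1"
    and yy: "{y, y'} \<in> E2" and e1: "\<epsilon>1 = {(x, y), (x, y')}" and ne: "\<epsilon>2 \<noteq> \<epsilon>1"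
    and s: "s = 1 \<or> s = -1" and S: "\<forall>w\<in>KK E. w \<epsilon>1 = s * w \<epsilon>2"
  shows "case_i_swap V1 E1 V2 E2 \<epsilon>1 \<epsilon>2 \<or> case_ii_base V1 E1 V2 E2 \<epsilon>1 \<epsilon>2"
proof -
  obtain b where xb: "{x, b} \<in> E1" using neighbor_exists[OF c1 card1 x] by blast
  have dy: "y \<noteq> y'" "y \<in> V2" "y' \<in> V2" using graph_edge[OF g2 yy] by auto
  have cont: "\<epsilon>2 = {(c, y), (c, y')} \<or> \<epsilon>2 = {(x, y), (c, y)} \<or> \<epsilon>2 = {(x, y'), (c, y')}"
    if xc: "{x, c} \<in> E1" for c
  proof -
    have "x \<noteq> c" using graph_edge[OF g1 xc] by auto
    then have "sq x c y y' \<epsilon>1 \<noteq> 0" unfolding e1 using sq_val[OF _ dy(1)] by simp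
    then show ?thesis using sq_contains[OF xc yy s S] ne e1 by blast
  qed
  have dxb: "x \<noteq> b" using graph_edge[OF g1 xb] by auto
  have hx: "c = b" if xc: "{x, c} \<in> E1" for c
  proof (rule ccontr)
    assume cb: "c \<noteq> b"
    have dxc: "x \<noteq> c" using graph_edge[OF g1 xc] by auto
    from cont[OF xb] cont[OF xc] show False
      using cb dxc dxb dy(1) by (elim disjE) (simp_all add: doubleton_eq_iff)
  qed
  have px: "pendant V1 E1 x" using pendant_intro[OF x xb] hx by blast
  from cont[OF xb] show ?thesis
  proof (elim disjE)
    assume e2: "\<epsilon>2 = {(b, y), (b, y')}"
    have "sq x b y y' \<epsilon>1 = s * sq x b y y' \<epsilon>2" using S sq_K[OF xb yy] by blast
    then have sm: "s = 1" unfolding e1 e2 using sq_val[OF dxb dy(1)] by simp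
    have w2: "w2 {y, y'} = 0" if w2: "w2 \<in> KK E2" for w2
    proof -
      have "lift2 x w2 \<epsilon>1 = s * lift2 x w2 \<epsilon>2" using S lift2_K[OF x w2] by blast
      moreover have "lift2 x w2 \<epsilon>1 = w2 {y, y'}" unfolding e1 using lift2_val T2_mem[OF x yy] by blast
      moreover have "lift2 x w2 \<epsilon>2 = 0" unfolding e2 using lift2_val0 dxb by metis
      ultimately show ?thesis by simp
    qed
    have s2: "-2 \<notin> eig_support E2 (std_basis {y, y'})"
      using supp_iff[OF graph_goodE[OF g2] yy] w2 by blast
    have hb: "c = x" if bc: "{b, c} \<in> E1" for c
    proof (rule ccontr)
      assume cx: "c \<noteq> x"
      have dbc: "b \<noteq> c" using graph_edge[OF g1 bc] by auto
      have "sq b c y y' \<epsilon>1 = s * sq b c y y' \<epsilon>2" using S sq_K[OF bc yy] by blast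
      moreover have "sq b c y y' \<epsilon>2 = 1" unfolding e2 using sq_val[OF dbc dy(1)] by simp
      moreover have "sq b c y y' \<epsilon>1 = 0" unfolding e1 using dxb cx dbc dy(1)
        by (intro sq_val0) (simp_all add: doubleton_eq_iff)
      ultimately show False using sm by simp
    qed
    have tv: "V1 = {x, b} \<and> E1 = {{x, b}}" using two_vertex[OF c1 xb] hx hb by blast
    show ?thesis unfolding case_i_swap_def using dxb tv yy s2 e1 e2 by blast
  next
    assume e2: "\<epsilon>2 = {(x, y), (b, y)}"
    show ?thesis using L2B[OF x xb yy px e1 e2 s S] by blast
  next
    assume e2: "\<epsilon>2 = {(x, y'), (b, y')}"
    have yy': "{y', y} \<in> E2" using yy by (simp add: insert_commute)
    have e1': "\<epsilon>1 = {(x, y'), (x, y)}" using e1 by (simp add: insert_commute)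
    show ?thesis using L2B[OF x xb yy' px e1' e2 s S] by blast
  qed
qed

lemma L1:
  assumes c2: "connected_graph V2 E2" and card2: "card V2 \<ge> 2" and y: "y \<in> V2"
    and xx: "{x, x'} \<in> E1" and e1: "\<epsilon>1 = {(x, y), (x', y)}" and ne: "\<epsilon>2 \<noteq> \<epsilon>1"
    and s: "s = 1 \<or> s = -1" and S: "\<forall>w\<in>KK E. w \<epsilon>1 = s * w \<epsilon>2"
  shows "case_i_base V1 E1 V2 E2 \<epsilon>1 \<epsilon>2 \<or> case_ii_base V1 E1 V2 E2 \<epsilon>2 \<epsilon>1"
proof -
  obtain b where yb: "{y, b} \<in> E2" using neighbor_exists[OF c2 card2 y] by blast
  have dx: "x \<noteq> x'" "x \<in> V1" "x' \<in> V1" using graph_edge[OF g1 xx] by auto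
  have cont: "\<epsilon>2 = {(x, c), (x', c)} \<or> \<epsilon>2 = {(x, y), (x, c)} \<or> \<epsilon>2 = {(x', y), (x', c)}"
    if yc: "{y, c} \<in> E2" for c
  proof -
    have "y \<noteq> c" using graph_edge[OF g2 yc] by auto
    then have "sq x x' y c \<epsilon>1 \<noteq> 0" unfolding e1 using sq_val[OF dx(1)] by simp
    then show ?thesis using sq_contains[OF xx yc s S] ne e1 by blast
  qed
  have dyb: "y \<noteq> b" using graph_edge[OF g2 yb] by auto
  have hy: "c = b" if yc: "{y, c} \<in> E2" for c
  proof (rule ccontr)
    assume cb: "c \<noteq> b"
    have dyc: "y \<noteq> c" using graph_edge[OF g2 yc] by auto
    from cont[OF yb] cont[OF yc] show False
      using cb dyc dyb dx(1) by (elim disjE) (simp_all add: doubleton_eq_iff)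
  qed
  have py: "pendant V2 E2 y" using pendant_intro[OF y yb] hy by blast
  from cont[OF yb] show ?thesis
  proof (elim disjE)
    assume e2: "\<epsilon>2 = {(x, b), (x', b)}"
    have "sq x x' y b \<epsilon>1 = s * sq x x' y b \<epsilon>2" using S sq_K[OF xx yb] by blast
    then have sm: "s = 1" unfolding e1 e2 using sq_val[OF dx(1) dyb] by simp
    have w1: "w1 {x, x'} = 0" if w1: "w1 \<in> KK E1" for w1
    proof -
      have "lift1 y w1 \<epsilon>1 = s * lift1 y w1 \<epsilon>2" using S lift1_K[OF y w1] by blast
      moreover have "lift1 y w1 \<epsilon>1 = w1 {x, x'}" unfolding e1 using lift1_val T1_mem[OF y xx] by blast
      moreover have "lift1 y w1 \<epsilon>2 = 0" unfolding e2 using lift1_val0 dyb by metis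
      ultimately show ?thesis by simp
    qed
    have s1: "-2 \<notin> eig_support E1 (std_basis {x, x'})"
      using supp_iff[OF graph_goodE[OF g1] xx] w1 by blast
    have hb: "c = y" if bc: "{b, c} \<in> E2" for c
    proof (rule ccontr)
      assume cy: "c \<noteq> y"
      have dbc: "b \<noteq> c" using graph_edge[OF g2 bc] by auto
      have "sq x x' b c \<epsilon>1 = s * sq x x' b c \<epsilon>2" using S sq_K[OF xx bc] by blast
      moreover have "sq x x' b c \<epsilon>2 = -1" unfolding e2 using sq_val[OF dx(1) dbc] by simp
      moreover have "sq x x' b c \<epsilon>1 = 0" unfolding e1 using dyb cy dbc dx(1)
        by (intro sq_val0) (simp_all add: doubleton_eq_iff)
      ultimately show False using sm by simp
    qed
    have tv: "V2 = {y, b} \<and> E2 = {{y, b}}" using two_vertex[OF c2 yb] hy hb by blast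
    show ?thesis unfolding case_i_base_def using dyb tv xx s1 e1 e2 by blast
  next
    assume e2: "\<epsilon>2 = {(x, y), (x, b)}"
    show ?thesis using L1B[OF y yb xx py e1 e2 s S] by blast
  next
    assume e2: "\<epsilon>2 = {(x', y), (x', b)}"
    have xx': "{x', x} \<in> E1" using xx by (simp add: insert_commute)
    have e1': "\<epsilon>1 = {(x', y), (x, y)}" using e1 by (simp add: insert_commute)
    show ?thesis using L1B[OF y yb xx' py e1' e2 s S] by blast
  qed
qed


lemma ci_base_eq:
  assumes "case_i_base V1 E1 V2 E2 \<epsilon>1 \<epsilon>2" shows "\<forall>w\<in>KK E. w \<epsilon>1 = w \<epsilon>2"
proof
  fix w assume w: "w \<in> KK E"
  obtain u v a b where h: "u \<noteq> v" "V2 = {u, v}" "E2 = {{u, v}}" "{a, b} \<in> E1"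
    "-2 \<notin> eig_support E1 (std_basis {a, b})" "\<epsilon>1 = {(a, u), (b, u)}" "\<epsilon>2 = {(a, v), (b, v)}"
    using assms unfolding case_i_base_def by blast
  have "\<forall>w1\<in>KK E1. w1 {a, b} = 0" using supp_iff[OF graph_goodE[OF g1] h(4)] h(5) by blast
  then have "dif1 u v w {a, b} = 0" using dif1_K[OF h(2,3) w] by blast
  then show "w \<epsilon>1 = w \<epsilon>2" using dif1_val[OF h(4)] h(6,7) by simp
qed

lemma ci_swap_eq:
  assumes "case_i_swap V1 E1 V2 E2 \<epsilon>1 \<epsilon>2" shows "\<forall>w\<in>KK E. w \<epsilon>1 = w \<epsilon>2"
proof
  fix w assume w: "w \<in> KK E"
  obtain u v a b where h: "u \<noteq> v" "V1 = {u, v}" "E1 = {{u, v}}" "{a, b} \<in> E2"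
    "-2 \<notin> eig_support E2 (std_basis {a, b})" "\<epsilon>1 = {(u, a), (u, b)}" "\<epsilon>2 = {(v, a), (v, b)}"
    using assms unfolding case_i_swap_def by blast
  have "\<forall>w2\<in>KK E2. w2 {a, b} = 0" using supp_iff[OF graph_goodE[OF g2] h(4)] h(5) by blast
  then have "dif2 u v w {a, b} = 0" using dif2_K[OF h(2,3) w] by blast
  then show "w \<epsilon>1 = w \<epsilon>2" using dif2_val[OF h(4)] h(6,7) by simp
qed

lemma ci_eq: "case_i V1 E1 V2 E2 \<epsilon>1 \<epsilon>2 \<Longrightarrow> \<forall>w\<in>KK E. w \<epsilon>1 = w \<epsilon>2"
  unfolding case_i_def using ci_base_eq ci_swap_eq by metis

lemma cii_base_eq:
  assumes "case_ii_base V1 E1 V2 E2 \<epsilon>1 \<epsilon>2" shows "\<forall>w\<in>KK E. w \<epsilon>1 = - w \<epsilon>2"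
proof
  fix w assume w: "w \<in> KK E"
  obtain a b \<alpha> \<beta> where h: "pendant V1 E1 a" "{a, b} \<in> E1" "pendant V2 E2 \<alpha>" "{\<alpha>, \<beta>} \<in> E2"
    "\<epsilon>1 = {(a, \<alpha>), (a, \<beta>)}" "\<epsilon>2 = {(a, \<alpha>), (b, \<alpha>)}"
    using assms unfolding case_ii_base_def by blast
  have d: "a \<noteq> b" "\<alpha> \<noteq> \<beta>" "a \<in> V1" "\<alpha> \<in> V2" using graph_edge[OF g1 h(2)] graph_edge[OF g2 h(4)] by auto
  have ne: "\<epsilon>1 \<noteq> \<epsilon>2" unfolding h(5,6) using d by (simp add: doubleton_eq_iff)
  have SI: "{e\<in>E. (a, \<alpha>) \<in> e} = {\<epsilon>1, \<epsilon>2}"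
  proof
    show "{e\<in>E. (a, \<alpha>) \<in> e} \<subseteq> {\<epsilon>1, \<epsilon>2}"
    proof
      fix e assume "e \<in> {e\<in>E. (a, \<alpha>) \<in> e}"
      then have eE: "e \<in> E" "(a, \<alpha>) \<in> e" by auto
      from eE(1) show "e \<in> {\<epsilon>1, \<epsilon>2}"
      proof (cases rule: cartE_cases)
        case (1 x y y')
        then have xa: "x = a" "\<alpha> = y \<or> \<alpha> = y'" using eE(2) by auto
        show ?thesis
        proof (cases "\<alpha> = y")
          case True
          then have "y' = \<beta>" using pendant_unique[OF h(3,4)] 1(3) by blast
          then show ?thesis using 1(1) xa(1) True h(5) by simp
        next
          case False
          then have "\<alpha> = y'" using xa by simp
          then have "{\<alpha>, y} \<in> E2" using 1(3) by (simp add: insert_commute)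
          then have "y = \<beta>" using pendant_unique[OF h(3,4)] by blast
          then show ?thesis using 1(1) xa(1) \<open>\<alpha> = y'\<close> h(5) by (simp add: insert_commute)
        qed
      next
        case (2 x x' y)
        then have ya: "y = \<alpha>" "a = x \<or> a = x'" using eE(2) by auto
        show ?thesis
        proof (cases "a = x")
          case True
          then have "x' = b" using pendant_unique[OF h(1,2)] 2(3) by blast
          then show ?thesis using 2(1) ya(1) True h(6) by simp
        next
          case False
          then have "a = x'" using ya by simp
          then have "{a, x} \<in> E1" using 2(3) by (simp add: insert_commute)
          then have "x = b" using pendant_unique[OF h(1,2)] by blast
          then show ?thesis using 2(1) ya(1) \<open>a = x'\<close> h(6) by (simp add: insert_commute)
        qed
      qed
    qed
    show "{\<epsilon>1, \<epsilon>2} \<subseteq> {e\<in>E. (a, \<alpha>) \<in> e}"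
      using T2_mem[OF d(3) h(4)] T1_mem[OF d(4) h(2)] h(5,6) by auto
  qed
  have "vsum E w (a, \<alpha>) = w \<epsilon>1 + w \<epsilon>2" unfolding vsum_def SI using ne by simp
  then show "w \<epsilon>1 = - w \<epsilon>2" using w unfolding KK_def by auto
qed

lemma cii_eq: "case_ii V1 E1 V2 E2 \<epsilon>1 \<epsilon>2 \<Longrightarrow> \<forall>w\<in>KK E. w \<epsilon>1 = - w \<epsilon>2"
  unfolding case_ii_def using cii_base_eq by force

lemma nonzero:
  assumes c1: "connected_graph V1 E1" and card1: "card V1 \<ge> 2"
    and c2: "connected_graph V2 E2" and card2: "card V2 \<ge> 2" and e: "\<epsilon> \<in> E"
  shows "\<exists>w\<in>KK E. w \<epsilon> \<noteq> 0"
  using e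
proof (cases rule: cartE_cases)
  case (1 x y y')
  obtain b where xb: "{x, b} \<in> E1" using neighbor_exists[OF c1 card1 1(2)] by blast
  have "x \<noteq> b" "y \<noteq> y'" using graph_edge[OF g1 xb] graph_edge[OF g2 1(3)] by auto
  then have "sq x b y y' \<epsilon> = 1" using sq_val 1(1) by simp
  then show ?thesis using sq_K[OF xb 1(3)] by force
next
  case (2 x x' y)
  obtain b where yb: "{y, b} \<in> E2" using neighbor_exists[OF c2 card2 2(2)] by blast
  have "x \<noteq> x'" "y \<noteq> b" using graph_edge[OF g1 2(3)] graph_edge[OF g2 yb] by auto
  then have "sq x x' y b \<epsilon> = -1" using sq_val 2(1) by simp
  then show ?thesis using sq_K[OF 2(3) yb] by force
qed

lemma forward:
  assumes c1: "connected_graph V1 E1" and card1: "card V1 \<ge> 2"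
    and c2: "connected_graph V2 E2" and card2: "card V2 \<ge> 2" and e: "\<epsilon>1 \<in> E" and ne: "\<epsilon>1 \<noteq> \<epsilon>2"
    and s: "s = 1 \<or> s = -1" and S: "\<forall>w\<in>KK E. w \<epsilon>1 = s * w \<epsilon>2"
  shows "case_i V1 E1 V2 E2 \<epsilon>1 \<epsilon>2 \<or> case_ii V1 E1 V2 E2 \<epsilon>1 \<epsilon>2"
  using e
proof (cases rule: cartE_cases)
  case (1 x y y')
  show ?thesis using L2[OF c1 card1 1(2) 1(3) 1(1) _ s S] ne unfolding case_i_def case_ii_def by metis
next
  case (2 x x' y)
  show ?thesis using L1[OF c2 card2 2(2) 2(3) 2(1) _ s S] ne unfolding case_i_def case_ii_def by metis
qed

end

theorem mainTheorem17:
  fixes V1 :: "'a set" and E1 :: "'a set set" and V2 :: "'b set" and E2 :: "'b set set"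
    and \<epsilon>1 \<epsilon>2 :: "('a \<times> 'b) set"
  assumes "connected_graph V1 E1" and "connected_graph V2 E2"
    and "card V1 \<ge> 2" and "card V2 \<ge> 2"
    and "\<epsilon>1 \<in> cart_E V1 E1 V2 E2" and "\<epsilon>2 \<in> cart_E V1 E1 V2 E2" and "\<epsilon>1 \<noteq> \<epsilon>2"
  defines "F \<equiv> (\<lambda>\<epsilon>. line_proj (cart_E V1 E1 V2 E2) (-2) (std_basis \<epsilon>))"
  shows "((F \<epsilon>1 = F \<epsilon>2 \<or> F \<epsilon>1 = (\<lambda>x. - F \<epsilon>2 x)) \<longleftrightarrow>
            (case_i V1 E1 V2 E2 \<epsilon>1 \<epsilon>2 \<or> case_ii V1 E1 V2 E2 \<epsilon>1 \<epsilon>2))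
       \<and> (case_i V1 E1 V2 E2 \<epsilon>1 \<epsilon>2 \<longrightarrow> F \<epsilon>1 = F \<epsilon>2 \<and> F \<epsilon>1 \<noteq> (\<lambda>_. 0))
       \<and> (case_ii V1 E1 V2 E2 \<epsilon>1 \<epsilon>2 \<longrightarrow> F \<epsilon>1 = (\<lambda>x. - F \<epsilon>2 x) \<and> F \<epsilon>1 \<noteq> (\<lambda>_. 0))"
proof -
  interpret GG V1 E1 V2 E2
    using assms(1,2) unfolding connected_graph_def by unfold_locales auto
  note g = goodE_cart
  have eqP: "F \<epsilon>1 = F \<epsilon>2 \<longleftrightarrow> (\<forall>w\<in>KK (cart_E V1 E1 V2 E2). w \<epsilon>1 = 1 * w \<epsilon>2)"
    using proj_eq_iff[OF g assms(5,6), of 1] unfolding F_def by simp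
  have eqM: "F \<epsilon>1 = (\<lambda>x. - F \<epsilon>2 x) \<longleftrightarrow> (\<forall>w\<in>KK (cart_E V1 E1 V2 E2). w \<epsilon>1 = (-1) * w \<epsilon>2)"
    using proj_eq_iff[OF g assms(5,6), of "-1"] unfolding F_def by simp
  have nz: "F \<epsilon>1 \<noteq> (\<lambda>_. 0)"
    using proj_zero_iff[OF g assms(5)] nonzero[OF assms(1,3,2,4,5)] unfolding F_def by auto
  have fw: "case_i V1 E1 V2 E2 \<epsilon>1 \<epsilon>2 \<or> case_ii V1 E1 V2 E2 \<epsilon>1 \<epsilon>2"
    if "F \<epsilon>1 = F \<epsilon>2 \<or> F \<epsilon>1 = (\<lambda>x. - F \<epsilon>2 x)"
  proof -
    from that show ?thesis
    proof
      assume "F \<epsilon>1 = F \<epsilon>2"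
      then show ?thesis using forward[OF assms(1,3,2,4,5,7), of 1] eqP by simp
    next
      assume "F \<epsilon>1 = (\<lambda>x. - F \<epsilon>2 x)"
      then show ?thesis using forward[OF assms(1,3,2,4,5,7), of "-1"] eqM by simp
    qed
  qed
  have ci: "case_i V1 E1 V2 E2 \<epsilon>1 \<epsilon>2 \<longrightarrow> F \<epsilon>1 = F \<epsilon>2" using ci_eq eqP by simp
  have cii: "case_ii V1 E1 V2 E2 \<epsilon>1 \<epsilon>2 \<longrightarrow> F \<epsilon>1 = (\<lambda>x. - F \<epsilon>2 x)" using cii_eq eqM by simp
  show ?thesis using fw ci cii nz by blast
qed


end
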